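(* Let $F$, $H$, $X$, $\Omega$, $Q$ and the sequences generated by the IneIREG method be as described in the context, and suppose $H$ is $\mu$-strongly monotone for some $\mu>0$. Suppose $\eta_k\equiv\eta>0$; $\lambda_k\in[\underline\lambda,\overline\lambda]$ for all $k\ge0$ with $0<\underline\lambda\le\overline\lambda<1/L$, $L:=L_F+\eta L_H$; and $\alpha_0\in[0,1]$ and $\alpha_{k+1}\le(1-\beta_k)\alpha_k$ for all $k\ge0$, where $\beta_k:=\big(\frac{1}{1-\lambda_k^2L^2}+\frac{1}{2\lambda_k\eta\mu}\big)^{-1}$. Define $p_k:=\big(\prod_{i=0}^k(1-\beta_i)\big)^{-1}$ for $k\ge0$, for $k\ge1$ $\Lambda_k:=\sum_{j=0}^{k-1}\lambda_j\eta p_j$ and $\overline y_k:=\Lambda_k^{-1}\sum_{j=0}^{k-1}\lambda_j\eta p_jy_j$, and $\beta:=\big(\frac{1}{1-\overline\lambda^2L^2}+\frac{1}{2\underline\lambda\eta\mu}\big)^{-1}\in(0,1)$. Then for all $k\ge1$, $$0\le\mathrm{Gap}(\overline y_k,F,X)\le(k+1)(1-\beta)^k\Big(\frac{D_X^2}{\underline\lambda}\Big)+\eta\Big(\frac{\overline\lambda C_HD_X}{\underline\lambda}\Big).$$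
   Context: Work in $\mathbb{R}^n$ with Euclidean inner product $\langle\cdot,\cdot\rangle$ and norm $\|\cdot\|$. The maps $F\colon \mathrm{Dom}\,F\to\mathbb{R}^n$ and $H\colon\mathrm{Dom}\,H\to\mathbb{R}^n$ are monotone and Lipschitz continuous with constants $L_F>0$ and $L_H>0$; $H$ is $\mu$-strongly monotone means $\langle H(x)-H(y),x-y\rangle\ge\mu\|x-y\|^2$ for all $x,y\in\mathrm{Dom}\,H$. $X$ is a nonempty compact convex set and $\Omega$ a nonempty closed convex set with $X\subset\Omega\subset\mathrm{Dom}\,F\cap\mathrm{Dom}\,H$; $P_X,P_\Omega$ denote orthogonal projections. $Q:=\{x\in X:\langle F(x),y-x\rangle\ge0\ \forall y\in X\}$ is assumed nonempty. $D_X:=\sup_{x,y\in X}\|x-y\|$, $C_H:=\sup_{x\in X}\|H(x)\|$. $\mathrm{Gap}(z,F,X):=\sup_{x\in X}\langle F(x),z-x\rangle$. IneIREG method: start with $x_0=x_{-1}\in X$; for $k=0,1,\dots$, with parameters $\alpha_k\ge0$, $\lambda_k>0$, $\eta_k>0$, set $w_k=x_k+\alpha_k(x_k-x_{k-1})$, $w'_k=P_\Omega(w_k)$, $y_k=P_X\big(w_k-\lambda_k(F(w'_k)+\eta_kH(w'_k))\big)$, $x_{k+1}=P_X\big(w_k-\lambda_k(F(y_k)+\eta_kH(y_k))\big)$. *)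

theory Defs
  imports "HOL-Analysis.Analysis"
begin

definition monotone_op :: "('a::real_inner \<Rightarrow> 'a) \<Rightarrow> 'a set \<Rightarrow> bool" where
  "monotone_op T D \<longleftrightarrow> (\<forall>x\<in>D. \<forall>y\<in>D. inner (T x - T y) (x - y) \<ge> 0)"

definition strongly_monotone_op :: "real \<Rightarrow> ('a::real_inner \<Rightarrow> 'a) \<Rightarrow> 'a set \<Rightarrow> bool" where
  "strongly_monotone_op \<mu> T D \<longleftrightarrow>
     (\<forall>x\<in>D. \<forall>y\<in>D. inner (T x - T y) (x - y) \<ge> \<mu> * (norm (x - y))\<^sup>2)"

definition VI_sol :: "('a::real_inner \<Rightarrow> 'a) \<Rightarrow> 'a set \<Rightarrow> 'a set" where
  "VI_sol F X = {x \<in> X. \<forall>y\<in>X. inner (F x) (y - x) \<ge> 0}"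

definition gap :: "'a::real_inner \<Rightarrow> ('a \<Rightarrow> 'a) \<Rightarrow> 'a set \<Rightarrow> real" where
  "gap z F X = (SUP x\<in>X. inner (F x) (z - x))"

end

theory Submission
  imports Defs "HOL-Analysis.Analysis"
begin

lemma proj_ineq:
  fixes S :: "'a::euclidean_space set"
  assumes "convex S" "closed S" "S \<noteq> {}" "z \<in> S"
  shows "inner (a - closest_point S a) (z - closest_point S a) \<le> 0"
  by (rule any_closest_point_dot) (use assms closest_point_exists[of S a] in auto)

lemma step_ineq:
  fixes w y x1 z g0 g1 :: "'a::real_inner"
  assumes h1: "inner (w - lam *\<^sub>R g1 - x1) (z - x1) \<le> 0"
    and h2: "inner (w - lam *\<^sub>R g0 - y) (x1 - y) \<le> 0"
    and h3: "norm (g1 - g0) \<le> L * norm (y - w)"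
    and lam: "lam \<ge> 0" and L: "L \<ge> 0"
  shows "(norm (x1 - z))\<^sup>2 \<le> (norm (w - z))\<^sup>2 - (1 - lam\<^sup>2 * L\<^sup>2) * (norm (w - y))\<^sup>2
            + 2 * lam * inner g1 (z - y)"
proof -
  have id: "(norm (x1 - z))\<^sup>2 = (norm (w - z))\<^sup>2 - (norm (w - y))\<^sup>2 - (norm (y - x1))\<^sup>2
      - 2 * inner (w - y) (y - x1) + 2 * inner (w - x1) (z - x1)"
    by (simp add: power2_norm_eq_inner inner_diff_left inner_diff_right inner_commute algebra_simps)
  have e1: "inner (w - x1) (z - x1) \<le> lam * inner g1 (z - x1)"
    using h1 by (simp add: inner_diff_left algebra_simps)
  have e2: "- inner (w - y) (y - x1) \<le> lam * inner g0 (x1 - y)"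
    using h2 by (simp add: inner_diff_left inner_diff_right algebra_simps)
  have e3: "inner g1 (z - x1) = inner g1 (z - y) + inner g1 (y - x1)"
    by (simp add: inner_diff_right)
  have e4: "inner g0 (x1 - y) = - inner g0 (y - x1)"
    by (simp add: inner_diff_right)
  have cs: "inner (g1 - g0) (y - x1) \<le> L * norm (y - w) * norm (y - x1)"
    using norm_cauchy_schwarz[of "g1 - g0" "y - x1"] h3
    by (meson mult_right_mono norm_ge_zero order_trans)
  have amgm: "2 * lam * (L * norm (y - w) * norm (y - x1)) \<le> lam\<^sup>2 * L\<^sup>2 * (norm (y - w))\<^sup>2 + (norm (y - x1))\<^sup>2"
  proof -
    have "0 \<le> (lam * L * norm (y - w) - norm (y - x1))\<^sup>2" by simp
    thus ?thesis by (simp add: power2_eq_square algebra_simps)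
  qed
  have nyw: "norm (y - w) = norm (w - y)" by (simp add: norm_minus_commute)
  have "inner g1 (y - x1) - inner g0 (y - x1) = inner (g1 - g0) (y - x1)"
    by (simp add: inner_diff_left)
  then have "2 * lam * inner g1 (y - x1) - 2 * lam * inner g0 (y - x1) \<le> 2 * lam * (L * norm (y - w) * norm (y - x1))"
    using cs lam by (smt (verit, ccfv_SIG) mult_left_mono right_diff_distrib)
  have e1': "inner (w - x1) (z - x1) \<le> lam * inner g1 (z - y) + lam * inner g1 (y - x1)"
    using e1 e3 by (simp add: distrib_left)
  have e2': "- inner (w - y) (y - x1) \<le> - (lam * inner g0 (y - x1))"
    using e2 e4 by simp
  show ?thesis using id e1' e2' amgm[unfolded nyw] \<open>2 * lam * inner g1 (y - x1) - 2 * lam * inner g0 (y - x1) \<le> _\<close>[unfolded nyw]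
    by (simp add: algebra_simps)
qed

lemma cs_ineq:
  fixes c1 c2 a b n :: real
  assumes "c1 > 0" "c2 > 0" "a \<ge> 0" "b \<ge> 0" "n \<le> a + b" "n \<ge> 0"
  shows "inverse (1 / c1 + 1 / c2) * n\<^sup>2 \<le> c1 * a\<^sup>2 + c2 * b\<^sup>2"
proof -
  have "(a + b)\<^sup>2 \<le> (1 / c1 + 1 / c2) * (c1 * a\<^sup>2 + c2 * b\<^sup>2)"
  proof -
    have "0 \<le> (c1 * a - c2 * b)\<^sup>2" by simp
    then have "0 \<le> (c1 * a - c2 * b)\<^sup>2 / (c1 * c2)" using assms by simp
    moreover have "(1 / c1 + 1 / c2) * (c1 * a\<^sup>2 + c2 * b\<^sup>2) - (a + b)\<^sup>2 = (c1 * a - c2 * b)\<^sup>2 / (c1 * c2)"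
      using assms by (simp add: field_simps power2_eq_square)
    ultimately show ?thesis by linarith
  qed
  moreover have "n\<^sup>2 \<le> (a + b)\<^sup>2" using assms by (simp add: power_mono)
  moreover have "1 / c1 + 1 / c2 > 0" using assms by (simp add: add_pos_pos)
  ultimately have "n\<^sup>2 \<le> (1 / c1 + 1 / c2) * (c1 * a\<^sup>2 + c2 * b\<^sup>2)" by linarith
  then show ?thesis using \<open>1 / c1 + 1 / c2 > 0\<close>
    by (simp add: field_simps)
qed

lemma inertial_id:
  fixes u v z :: "'a::real_inner"
  shows "(norm (u + al *\<^sub>R (u - v) - z))\<^sup>2 = (1 + al) * (norm (u - z))\<^sup>2 - al * (norm (v - z))\<^sup>2
     + al * (1 + al) * (norm (u - v))\<^sup>2"
  by (simp add: power2_norm_eq_inner inner_diff_left inner_diff_right inner_add_left inner_add_right inner_commute algebra_simps)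

theorem corollary4p18:
  fixes F H :: "'a::euclidean_space \<Rightarrow> 'a"
    and DomF DomH X \<Omega> :: "'a set"
    and LF LH \<mu> \<eta> lam_lo lam_hi :: real
    and \<alpha> lam :: "nat \<Rightarrow> real"
    and x w w' y :: "nat \<Rightarrow> 'a"
  assumes F_mono: "monotone_op F DomF" and F_lip: "LF-lipschitz_on DomF F" and LF_pos: "LF > 0"
    and H_mono: "monotone_op H DomH" and H_lip: "LH-lipschitz_on DomH H" and LH_pos: "LH > 0"
    and H_strong: "strongly_monotone_op \<mu> H DomH" and mu_pos: "\<mu> > 0"
    and X_ne: "X \<noteq> {}" and X_compact: "compact X" and X_convex: "convex X"
    and Om_ne: "\<Omega> \<noteq> {}" and Om_closed: "closed \<Omega>" and Om_convex: "convex \<Omega>"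
    and X_sub: "X \<subseteq> \<Omega>" and Om_sub: "\<Omega> \<subseteq> DomF \<inter> DomH"
    and Q_ne: "VI_sol F X \<noteq> {}"
    and eta_pos: "\<eta> > 0"
    and lam_lo_pos: "0 < lam_lo" and lam_lo_hi: "lam_lo \<le> lam_hi" and lam_hi_lt: "lam_hi < 1 / (LF + \<eta> * LH)"
    and lam_bounds: "\<And>k. lam_lo \<le> lam k \<and> lam k \<le> lam_hi"
    and alpha_nonneg: "\<And>k. \<alpha> k \<ge> 0"
    and alpha0: "\<alpha> 0 \<le> 1"
    and alpha_dec: "\<And>k. \<alpha> (Suc k) \<le>
        (1 - inverse (1 / (1 - (lam k)\<^sup>2 * (LF + \<eta> * LH)\<^sup>2) + 1 / (2 * lam k * \<eta> * \<mu>))) * \<alpha> k"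
    and x0: "x 0 \<in> X"
    and w_def: "\<And>k. w k = x k + \<alpha> k *\<^sub>R (x k - (if k = 0 then x 0 else x (k - 1)))"
    and w'_def: "\<And>k. w' k = closest_point \<Omega> (w k)"
    and y_def: "\<And>k. y k = closest_point X (w k - lam k *\<^sub>R (F (w' k) + \<eta> *\<^sub>R H (w' k)))"
    and x_def: "\<And>k. x (Suc k) = closest_point X (w k - lam k *\<^sub>R (F (y k) + \<eta> *\<^sub>R H (y k)))"
  shows "let L = LF + \<eta> * LH;
             \<beta>k = (\<lambda>k. inverse (1 / (1 - (lam k)\<^sup>2 * L\<^sup>2) + 1 / (2 * lam k * \<eta> * \<mu>)));
             p = (\<lambda>k. inverse (\<Prod>i\<in>{0..k}. 1 - \<beta>k i));
             \<Lambda> = (\<lambda>k. \<Sum>j<k. lam j * \<eta> * p j);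
             ybar = (\<lambda>k. inverse (\<Lambda> k) *\<^sub>R (\<Sum>j<k. (lam j * \<eta> * p j) *\<^sub>R y j));
             \<beta> = inverse (1 / (1 - lam_hi\<^sup>2 * L\<^sup>2) + 1 / (2 * lam_lo * \<eta> * \<mu>));
             DX = diameter X;
             CH = (SUP z\<in>X. norm (H z))
         in \<forall>k\<ge>1. 0 \<le> gap (ybar k) F X \<and>
               gap (ybar k) F X \<le> real (k + 1) * (1 - \<beta>) ^ k * (DX\<^sup>2 / lam_lo)
                                    + \<eta> * (lam_hi * CH * DX / lam_lo)"
proof -
  define L where "L = LF + \<eta> * LH"
  define bk where "bk = (\<lambda>k. inverse (1 / (1 - (lam k)\<^sup>2 * L\<^sup>2) + 1 / (2 * lam k * \<eta> * \<mu>)))"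
  define p where "p = (\<lambda>k. inverse (\<Prod>i\<in>{0..k}. 1 - bk i))"
  define Lam where "Lam = (\<lambda>k. \<Sum>j<k. lam j * \<eta> * p j)"
  define ybar where "ybar = (\<lambda>k. inverse (Lam k) *\<^sub>R (\<Sum>j<k. (lam j * \<eta> * p j) *\<^sub>R y j))"
  define b where "b = inverse (1 / (1 - lam_hi\<^sup>2 * L\<^sup>2) + 1 / (2 * lam_lo * \<eta> * \<mu>))"
  define DX where "DX = diameter X"
  define CH where "CH = (SUP z\<in>X. norm (H z))"
  define G where "G = (\<lambda>u. F u + \<eta> *\<^sub>R H u)"
  define pi where "pi = (\<lambda>k. \<Prod>i<k. 1 - bk i)"
  define c where "c = (\<lambda>k. inverse (pi k))"
  define xm where "xm = (\<lambda>k. if k = 0 then x 0 else x (k - 1))"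
  have Lpos: "L > 0" unfolding L_def using LF_pos LH_pos eta_pos by (simp add: add_pos_pos)
  have lamk_pos: "lam k > 0" for k using lam_bounds[of k] lam_lo_pos by linarith
  have lamhiL: "lam_hi * L < 1" using lam_hi_lt Lpos unfolding L_def[symmetric] by (simp add: field_simps)
  have lamL: "(lam k)\<^sup>2 * L\<^sup>2 \<le> lam_hi\<^sup>2 * L\<^sup>2" for k
    using lam_bounds[of k] lamk_pos[of k] Lpos
    by (simp add: power_mono mult_right_mono)
  have lamhiL2: "lam_hi\<^sup>2 * L\<^sup>2 < 1"
  proof -
    have "(lam_hi * L)\<^sup>2 < 1\<^sup>2" using lamhiL lam_lo_pos lam_lo_hi Lpos
      by (intro power_strict_mono) auto
    thus ?thesis by (simp add: power_mult_distrib)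
  qed
  have bk_props: "0 < bk k \<and> bk k < 1 \<and> b \<le> bk k" for k
  proof -
    define A where "A = 1 / (1 - (lam k)\<^sup>2 * L\<^sup>2)"
    define B where "B = 1 / (2 * lam k * \<eta> * \<mu>)"
    define A' where "A' = 1 / (1 - lam_hi\<^sup>2 * L\<^sup>2)"
    define B' where "B' = 1 / (2 * lam_lo * \<eta> * \<mu>)"
    have d: "0 < 1 - (lam k)\<^sup>2 * L\<^sup>2" "1 - (lam k)\<^sup>2 * L\<^sup>2 \<le> 1" using lamL[of k] lamhiL2 by auto
    have A1: "A \<ge> 1" unfolding A_def using d by simp
    have Bp: "B > 0" unfolding B_def using lamk_pos[of k] eta_pos mu_pos by simp
    have AA: "A \<le> A'" unfolding A_def A'_def using d lamL[of k] lamhiL2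
      by (intro divide_left_mono) auto
    have BB: "B \<le> B'" unfolding B_def B'_def using lam_bounds[of k] lam_lo_pos eta_pos mu_pos
      by (intro divide_left_mono mult_right_mono mult_pos_pos) auto
    have "bk k = inverse (A + B)" unfolding bk_def A_def B_def by simp
    moreover have "b = inverse (A' + B')" unfolding b_def A'_def B'_def by simp
    ultimately show ?thesis using A1 Bp AA BB
      by (auto intro!: le_imp_inverse_le simp: inverse_less_1_iff)
  qed
  have b_props: "0 < b" "b < 1"
  proof -
    define A' where "A' = 1 / (1 - lam_hi\<^sup>2 * L\<^sup>2)"
    define B' where "B' = 1 / (2 * lam_lo * \<eta> * \<mu>)"
    have "A' \<ge> 1" unfolding A'_def using lamhiL2 by (simp add: lamL)
    moreover have "B' > 0" unfolding B'_def using lam_lo_pos eta_pos mu_pos by simp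
    moreover have "b = inverse (A' + B')" unfolding b_def A'_def B'_def by simp
    ultimately show "0 < b" "b < 1" by (auto simp: inverse_less_1_iff)
  qed
  have pi_pos: "pi k > 0" for k unfolding pi_def using bk_props by (intro prod_pos) auto
  have pi_le: "pi k \<le> (1 - b) ^ k" for k
  proof -
    have "pi k \<le> (\<Prod>i<k. 1 - b)" unfolding pi_def using bk_props
      by (intro prod_mono) (auto simp: less_imp_le)
    thus ?thesis by simp
  qed
  have pi_Suc: "pi (Suc k) = pi k * (1 - bk k)" for k unfolding pi_def by simp
  have c_pos: "c k > 0" for k unfolding c_def using pi_pos by simp
  have p_c: "p k = c (Suc k)" for k
    unfolding p_def c_def pi_def by (simp add: atLeast0AtMost lessThan_Suc_atMost)
  have c_Suc: "c (Suc k) * (1 - bk k) = c k" for k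
    unfolding c_def pi_Suc using pi_pos[of k] bk_props[of k] by (simp add: field_simps)
  have alpha_le: "\<alpha> k \<le> 1 \<and> c k * \<alpha> k \<le> 1" for k
  proof (induction k)
    case 0
    then show ?case using alpha0 by (simp add: c_def pi_def)
  next
    case (Suc k)
    have a1: "\<alpha> (Suc k) \<le> (1 - bk k) * \<alpha> k" using alpha_dec[of k] unfolding bk_def L_def by simp
    have "(1 - bk k) * \<alpha> k \<le> \<alpha> k" using bk_props[of k] alpha_nonneg[of k]
      by (simp add: mult_left_le_one_le)
    moreover have "c (Suc k) * \<alpha> (Suc k) \<le> c (Suc k) * ((1 - bk k) * \<alpha> k)"
      using a1 c_pos[of "Suc k"] by (simp add: mult_left_mono)
    ultimately show ?case using Suc a1 c_Suc[of k] by (simp add: mult.assoc[symmetric])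
  qed
  have X_closed: "closed X" using X_compact by (simp add: compact_imp_closed)
  have X_bdd: "bounded X" using X_compact by (simp add: compact_imp_bounded)
  have xX: "x k \<in> X" for k
    by (cases k) (auto simp: x0 x_def intro!: closest_point_in_set X_closed X_ne)
  have yX: "y k \<in> X" for k
    by (auto simp: y_def intro!: closest_point_in_set X_closed X_ne)
  have xmX: "xm k \<in> X" for k unfolding xm_def using xX by auto
  have DX: "norm (u - v) \<le> DX" if "u \<in> X" "v \<in> X" for u v
    using diameter_bounded_bound[OF X_bdd that] unfolding DX_def by (simp add: dist_norm)
  have DX_nn: "DX \<ge> 0" using DX[of "x 0" "x 0"] xX by simp
  have DX2: "(norm (u - v))\<^sup>2 \<le> DX\<^sup>2" if "u \<in> X" "v \<in> X" for u v
    using DX[OF that] by (simp add: power_mono)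
  have H_bdd: "bdd_above ((\<lambda>z. norm (H z)) ` X)"
  proof -
    have "continuous_on DomH H" using H_lip by (rule lipschitz_on_continuous_on)
    then have "continuous_on X H" by (rule continuous_on_subset) (use X_sub Om_sub in auto)
    then have "compact (H ` X)" using X_compact by (rule compact_continuous_image)
    then obtain B where "\<forall>v\<in>H ` X. norm v \<le> B" using compact_imp_bounded bounded_iff by metis
    then show ?thesis by (auto simp: bdd_above_def)
  qed
  have CH: "norm (H z) \<le> CH" if "z \<in> X" for z unfolding CH_def using H_bdd that by (rule cSUP_upper2) simp
  have G_lip: "norm (G u - G v) \<le> L * norm (u - v)" if "u \<in> \<Omega>" "v \<in> \<Omega>" for u v
  proof -
    have "norm (F u - F v) \<le> LF * norm (u - v)"
      using lipschitz_onD[OF F_lip, of u v] that Om_sub by (auto simp: dist_norm)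
    moreover have "norm (H u - H v) \<le> LH * norm (u - v)"
      using lipschitz_onD[OF H_lip, of u v] that Om_sub by (auto simp: dist_norm)
    moreover have "G u - G v = (F u - F v) + \<eta> *\<^sub>R (H u - H v)" unfolding G_def by (simp add: algebra_simps)
    moreover have "norm ((F u - F v) + \<eta> *\<^sub>R (H u - H v)) \<le> norm (F u - F v) + \<eta> * norm (H u - H v)"
      using eta_pos by (metis abs_of_pos norm_scaleR norm_triangle_ineq)
    ultimately show ?thesis unfolding L_def using eta_pos
      by (smt (verit, ccfv_SIG) distrib_right mult.assoc mult_left_mono)
  qed
  have step: "2 * lam k * (inner (F z) (y k - z) + \<eta> * inner (H z) (y k - z))
      \<le> (1 - bk k) * (norm (w k - z))\<^sup>2 - (norm (x (Suc k) - z))\<^sup>2" if zX: "z \<in> X" for k z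
  proof -
    let ?g0 = "G (w' k)" and ?g1 = "G (y k)"
    have yk: "y k = closest_point X (w k - lam k *\<^sub>R ?g0)" unfolding y_def G_def ..
    have xk: "x (Suc k) = closest_point X (w k - lam k *\<^sub>R ?g1)" unfolding x_def G_def ..
    have h1: "inner (w k - lam k *\<^sub>R ?g1 - x (Suc k)) (z - x (Suc k)) \<le> 0"
      unfolding xk by (rule proj_ineq[OF X_convex X_closed X_ne zX])
    have h2: "inner (w k - lam k *\<^sub>R ?g0 - y k) (x (Suc k) - y k) \<le> 0"
      unfolding yk by (rule proj_ineq[OF X_convex X_closed X_ne xX])
    have w'O: "w' k \<in> \<Omega>" unfolding w'_def using Om_closed Om_ne by (rule closest_point_in_set)
    have ykO: "y k \<in> \<Omega>" using yX X_sub by auto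
    have "norm (y k - w' k) \<le> norm (y k - w k)"
      using closest_point_lipschitz[OF Om_convex Om_closed Om_ne, of "y k" "w k"]
        closest_point_self[OF ykO] unfolding w'_def by (simp add: dist_norm)
    then have h3: "norm (?g1 - ?g0) \<le> L * norm (y k - w k)"
      using G_lip[OF ykO w'O] Lpos by (smt (verit) mult_left_mono)
    have S: "(norm (x (Suc k) - z))\<^sup>2 \<le> (norm (w k - z))\<^sup>2 - (1 - (lam k)\<^sup>2 * L\<^sup>2) * (norm (w k - y k))\<^sup>2
            + 2 * lam k * inner ?g1 (z - y k)"
      by (rule step_ineq[OF h1 h2 h3]) (use lamk_pos[of k] Lpos in auto)
    have zD: "z \<in> DomF" "z \<in> DomH" "y k \<in> DomF" "y k \<in> DomH" using zX yX X_sub Om_sub by auto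
    have Fm: "inner (F z - F (y k)) (z - y k) \<ge> 0" using F_mono zD unfolding monotone_op_def by auto
    have Hm: "inner (H z - H (y k)) (z - y k) \<ge> \<mu> * (norm (z - y k))\<^sup>2"
      using H_strong zD unfolding strongly_monotone_op_def by auto
    have gi: "inner ?g1 (z - y k) \<le> inner (F z) (z - y k) + \<eta> * inner (H z) (z - y k) - \<eta> * \<mu> * (norm (z - y k))\<^sup>2"
    proof -
      have "inner ?g1 (z - y k) = inner (F (y k)) (z - y k) + \<eta> * inner (H (y k)) (z - y k)"
        unfolding G_def by (simp add: inner_add_left)
      moreover have "\<eta> * inner (H (y k)) (z - y k) \<le> \<eta> * (inner (H z) (z - y k) - \<mu> * (norm (z - y k))\<^sup>2)"
        using Hm eta_pos by (intro mult_left_mono) (auto simp: inner_diff_left)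
      ultimately show ?thesis using Fm by (simp add: inner_diff_left algebra_simps)
    qed
    have d: "0 < 1 - (lam k)\<^sup>2 * L\<^sup>2" using lamL[of k] lamhiL2 by auto
    have cs: "bk k * (norm (w k - z))\<^sup>2 \<le> (1 - (lam k)\<^sup>2 * L\<^sup>2) * (norm (w k - y k))\<^sup>2
        + (2 * lam k * \<eta> * \<mu>) * (norm (z - y k))\<^sup>2"
      unfolding bk_def
      by (rule cs_ineq) (use d lamk_pos[of k] eta_pos mu_pos norm_triangle_ineq[of "w k - y k" "y k - z"]
          norm_minus_commute[of z "y k"] in auto)
    have neg: "inner (F z) (y k - z) = - inner (F z) (z - y k)" "inner (H z) (y k - z) = - inner (H z) (z - y k)"
      by (simp_all add: inner_diff_right)
    have "2 * lam k * inner ?g1 (z - y k) \<le> 2 * lam k * (inner (F z) (z - y k) + \<eta> * inner (H z) (z - y k) - \<eta> * \<mu> * (norm (z - y k))\<^sup>2)"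
      using gi lamk_pos[of k] by (intro mult_left_mono) auto
    then show ?thesis using S cs neg by (simp add: algebra_simps)
  qed
  have p_pos: "p k > 0" for k using c_pos p_c by simp
  have alpha_le1: "\<alpha> k \<le> 1" for k using alpha_le by blast
  have cal_dec: "c (Suc k) * \<alpha> (Suc k) \<le> c k * \<alpha> k" for k
  proof -
    have a1: "\<alpha> (Suc k) \<le> (1 - bk k) * \<alpha> k" using alpha_dec[of k] unfolding bk_def L_def by simp
    have "c (Suc k) * \<alpha> (Suc k) \<le> c (Suc k) * ((1 - bk k) * \<alpha> k)"
      using a1 c_pos[of "Suc k"] by (simp add: mult_left_mono)
    thus ?thesis using c_Suc[of k] by (simp add: mult.assoc[symmetric])
  qed
  have key: "(\<Sum>j<k. 2 * lam j * p j * (inner (F z) (y j - z) + \<eta> * inner (H z) (y j - z)))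
      \<le> DX\<^sup>2 + 2 * DX\<^sup>2 * real k" if zX: "z \<in> X" for z k
  proof -
    define a where "a = (\<lambda>j. (norm (x j - z))\<^sup>2)"
    define am where "am = (\<lambda>j. (norm (xm j - z))\<^sup>2)"
    define T where "T = (\<lambda>j. inner (F z) (y j - z) + \<eta> * inner (H z) (y j - z))"
    define U where "U = (\<lambda>k. c k * a k - c k * \<alpha> k * am k + c k * \<alpha> k * DX\<^sup>2)"
    have aD: "a j \<le> DX\<^sup>2" for j unfolding a_def using DX2 xX zX by blast
    have amD: "am j \<le> DX\<^sup>2" for j unfolding am_def using DX2 xmX zX by blast
    have a_nn: "a j \<ge> 0" for j unfolding a_def by simp
    have am_Suc: "am (Suc j) = a j" for j unfolding am_def a_def xm_def by simp
    have inert: "(norm (w j - z))\<^sup>2 \<le> (1 + \<alpha> j) * a j - \<alpha> j * am j + 2 * \<alpha> j * DX\<^sup>2" for j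
    proof -
      have wj: "w j = x j + \<alpha> j *\<^sub>R (x j - xm j)" unfolding w_def xm_def ..
      have "\<alpha> j * \<alpha> j \<le> \<alpha> j" using alpha_nonneg[of j] alpha_le1[of j] by (simp add: mult_left_le_one_le)
      then have aa: "\<alpha> j * (1 + \<alpha> j) \<le> 2 * \<alpha> j" by (simp add: algebra_simps)
      have "\<alpha> j * (1 + \<alpha> j) * (norm (x j - xm j))\<^sup>2 \<le> (2 * \<alpha> j) * DX\<^sup>2"
        using aa alpha_nonneg[of j] DX2[OF xX xmX, of j j]
        by (rule_tac mult_mono) auto
      then show ?thesis unfolding wj inertial_id a_def am_def by simp
    qed
    have IND: "(\<Sum>j<k. 2 * lam j * p j * T j) + U k \<le> DX\<^sup>2 + 2 * DX\<^sup>2 * real k" for k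
    proof (induction k)
      case 0
      have "(1 - \<alpha> 0) * a 0 \<le> (1 - \<alpha> 0) * DX\<^sup>2" using aD alpha_le1[of 0] by (intro mult_left_mono) auto
      then show ?case unfolding U_def using am_def a_def xm_def by (simp add: c_def pi_def algebra_simps)
    next
      case (Suc k)
      have P1: "2 * lam k * p k * T k \<le> c k * (norm (w k - z))\<^sup>2 - p k * a (Suc k)"
      proof -
        have "p k * (2 * lam k * T k) \<le> p k * ((1 - bk k) * (norm (w k - z))\<^sup>2 - a (Suc k))"
          using step[OF zX, of k] p_pos[of k] unfolding T_def a_def by (intro mult_left_mono) auto
        moreover have pc1: "p k * (1 - bk k) = c k" using c_Suc p_c by simp
        moreover have "p k * ((1 - bk k) * (norm (w k - z))\<^sup>2 - a (Suc k)) = c k * (norm (w k - z))\<^sup>2 - p k * a (Suc k)"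
          unfolding pc1[symmetric] by (simp add: algebra_simps)
        moreover have "p k * (2 * lam k * T k) = 2 * lam k * p k * T k" by simp
        ultimately show ?thesis by linarith
      qed
      have P2: "c k * (norm (w k - z))\<^sup>2 \<le> c k * ((1 + \<alpha> k) * a k - \<alpha> k * am k + 2 * \<alpha> k * DX\<^sup>2)"
        using inert[of k] c_pos[of k] by (intro mult_left_mono) auto
      have P3: "0 \<le> (c k * \<alpha> k - c (Suc k) * \<alpha> (Suc k)) * (DX\<^sup>2 - a k)"
        using cal_dec[of k] aD[of k] by simp
      have P4: "c k * \<alpha> k \<le> 1" using alpha_le by blast
      have P4': "2 * DX\<^sup>2 * (c k * \<alpha> k) \<le> 2 * DX\<^sup>2" using P4 by (simp add: mult_left_le)
      have E: "2 * lam k * p k * T k + U (Suc k) \<le> U k + 2 * DX\<^sup>2"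
        using P1 P2 P3 P4' unfolding U_def am_Suc p_c by (simp add: algebra_simps)
      have "2 * DX\<^sup>2 * real (Suc k) = 2 * DX\<^sup>2 + 2 * DX\<^sup>2 * real k" by (simp add: algebra_simps)
      then show ?case using Suc E by simp
    qed
    have "U k \<ge> 0"
    proof -
      have "0 \<le> c k * (a k + \<alpha> k * (DX\<^sup>2 - am k))"
        using c_pos[of k] a_nn[of k] alpha_nonneg[of k] amD[of k] by (intro mult_nonneg_nonneg add_nonneg_nonneg) auto
      thus ?thesis unfolding U_def by (simp add: algebra_simps)
    qed
    with IND[of k] show ?thesis unfolding T_def by linarith
  qed
  define Lp where "Lp = (\<lambda>k. \<Sum>j<k. lam j * p j)"
  have Lam_eq: "Lam k = \<eta> * Lp k" for k
    unfolding Lam_def Lp_def by (simp add: sum_distrib_left algebra_simps)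
  have CH_nn: "0 \<le> CH" using CH[OF xX[of 0]] norm_ge_zero order_trans by blast
  have Lp_lb: "Lp k \<ge> lam_lo * inverse ((1 - b) ^ k)" if k1: "k \<ge> 1" for k
  proof -
    obtain m where km: "k = Suc m" using k1 by (cases k) auto
    have "Lp k = Lp m + lam m * p m" unfolding Lp_def km by simp
    moreover have "Lp m \<ge> 0" unfolding Lp_def using lamk_pos p_pos by (intro sum_nonneg) (simp add: less_imp_le)
    moreover have "lam m * p m \<ge> lam_lo * c k"
      using lam_bounds[of m] p_c[of m] km c_pos[of k] by (simp add: mult_right_mono)
    moreover have "c k \<ge> inverse ((1 - b) ^ k)" unfolding c_def
      using pi_le[of k] pi_pos[of k] by (rule_tac le_imp_inverse_le) auto
    ultimately show ?thesis using lam_lo_pos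
      by (smt (verit, ccfv_SIG) mult_left_mono)
  qed
  have bpow: "(1 - b) ^ k > 0" for k using b_props by simp
  have bound: "inner (F z) (ybar k - z) \<le> real (k + 1) * (1 - b) ^ k * (DX\<^sup>2 / lam_lo) + \<eta> * (lam_hi * CH * DX / lam_lo)"
    if zX: "z \<in> X" and k1: "k \<ge> 1" for z k
  proof -
    define SF where "SF = (\<Sum>j<k. lam j * p j * inner (F z) (y j - z))"
    define SH where "SH = (\<Sum>j<k. lam j * p j * inner (H z) (y j - z))"
    have Lp_pos: "Lp k > 0" using Lp_lb[OF k1] lam_lo_pos bpow[of k] by (smt (verit) positive_imp_inverse_positive mult_pos_pos)
    have invLp: "inverse (Lp k) \<le> (1 - b) ^ k / lam_lo"
    proof -
      have "inverse (Lp k) \<le> inverse (lam_lo * inverse ((1 - b) ^ k))"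
        using Lp_lb[OF k1] lam_lo_pos bpow[of k] by (intro le_imp_inverse_le) auto
      thus ?thesis by (simp add: field_simps)
    qed
    have "(\<Sum>j<k. 2 * lam j * p j * (inner (F z) (y j - z) + \<eta> * inner (H z) (y j - z))) = 2 * SF + 2 * \<eta> * SH"
    proof -
      have "2 * SF + 2 * \<eta> * SH = (\<Sum>j<k. 2 * (lam j * p j * inner (F z) (y j - z)) + 2 * \<eta> * (lam j * p j * inner (H z) (y j - z)))"
        unfolding SF_def SH_def sum.distrib sum_distrib_left ..
      also have "\<dots> = (\<Sum>j<k. 2 * lam j * p j * (inner (F z) (y j - z) + \<eta> * inner (H z) (y j - z)))"
        by (rule sum.cong) (simp_all add: algebra_simps)
      finally show ?thesis by simp
    qed
    then have k2: "2 * SF + 2 * \<eta> * SH \<le> DX\<^sup>2 + 2 * DX\<^sup>2 * real k" using key[OF zX, of k] by simp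
    have "SH \<ge> (\<Sum>j<k. lam j * p j * (- (CH * DX)))" unfolding SH_def
    proof (rule sum_mono)
      fix j assume "j \<in> {..<k}"
      have "\<bar>inner (H z) (y j - z)\<bar> \<le> norm (H z) * norm (y j - z)" by (rule Cauchy_Schwarz_ineq2)
      also have "\<dots> \<le> CH * DX" using CH[OF zX] DX[OF yX zX, of j] CH_nn by (intro mult_mono) auto
      finally have "inner (H z) (y j - z) \<ge> - (CH * DX)" by linarith
      then show "lam j * p j * (- (CH * DX)) \<le> lam j * p j * inner (H z) (y j - z)"
        using lamk_pos[of j] p_pos[of j] by (intro mult_left_mono) auto
    qed
    moreover have "(\<Sum>j<k. lam j * p j * (- (CH * DX))) = - (CH * DX * Lp k)"
      unfolding Lp_def by (simp add: sum_distrib_left sum_negf mult.commute)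
    ultimately have SH: "SH \<ge> - (CH * DX * Lp k)" by simp
    have "\<eta> * SH \<ge> - (\<eta> * (CH * DX * Lp k))" using mult_left_mono[OF SH, of \<eta>] eta_pos by simp
    then have SFb: "SF \<le> DX\<^sup>2 * (real k + 1/2) + \<eta> * CH * DX * Lp k" using k2 by (simp add: algebra_simps)
    have inner_eq: "inner (F z) (ybar k - z) = SF / Lp k"
    proof -
      have "inner (F z) (ybar k) = inverse (Lam k) * (\<Sum>j<k. (lam j * \<eta> * p j) * inner (F z) (y j))"
        unfolding ybar_def by (simp add: inner_sum_right)
      also have "\<dots> = inverse (Lp k) * (\<Sum>j<k. lam j * p j * inner (F z) (y j))"
        unfolding Lam_eq sum_distrib_left by (rule sum.cong) (use eta_pos in \<open>simp_all add: field_simps\<close>)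
      finally have "inner (F z) (ybar k) = inverse (Lp k) * (\<Sum>j<k. lam j * p j * inner (F z) (y j))" .
      moreover have "SF = (\<Sum>j<k. lam j * p j * inner (F z) (y j)) - Lp k * inner (F z) z"
        unfolding SF_def Lp_def by (simp add: inner_diff_right right_diff_distrib sum_subtractf sum_distrib_right)
      ultimately show ?thesis using Lp_pos by (simp add: inner_diff_right field_simps)
    qed
    have "SF / Lp k \<le> (DX\<^sup>2 * (real k + 1/2)) * inverse (Lp k) + \<eta> * CH * DX"
      using SFb Lp_pos by (simp add: field_simps)
    also have "\<dots> \<le> (DX\<^sup>2 * (real k + 1)) * ((1 - b) ^ k / lam_lo) + \<eta> * CH * DX"
      using invLp Lp_pos by (intro add_right_mono mult_mono) auto
    also have "\<eta> * CH * DX \<le> \<eta> * (lam_hi * CH * DX / lam_lo)"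
    proof -
      have "1 \<le> lam_hi / lam_lo" using lam_lo_hi lam_lo_pos by simp
      then have "CH * DX * 1 \<le> CH * DX * (lam_hi / lam_lo)" using CH_nn DX_nn by (intro mult_left_mono) auto
      then have "\<eta> * (CH * DX) \<le> \<eta> * (CH * DX * (lam_hi / lam_lo))" using eta_pos by (intro mult_left_mono) auto
      then show ?thesis by (simp add: algebra_simps)
    qed
    finally show ?thesis unfolding inner_eq by (simp add: algebra_simps)
  qed
  have main: "\<forall>k\<ge>1. 0 \<le> gap (ybar k) F X \<and>
               gap (ybar k) F X \<le> real (k + 1) * (1 - b) ^ k * (DX\<^sup>2 / lam_lo)
                                    + \<eta> * (lam_hi * CH * DX / lam_lo)"
  proof (intro allI impI conjI)
    fix k :: nat assume k1: "k \<ge> 1"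
    show "gap (ybar k) F X \<le> real (k + 1) * (1 - b) ^ k * (DX\<^sup>2 / lam_lo) + \<eta> * (lam_hi * CH * DX / lam_lo)"
      unfolding gap_def using bound k1 by (intro cSUP_least X_ne) auto
    have bdd: "bdd_above ((\<lambda>z. inner (F z) (ybar k - z)) ` X)"
      using bound k1 by (intro bdd_aboveI2) auto
    have Lp_pos: "Lp k > 0" using Lp_lb[OF k1] lam_lo_pos bpow[of k] by (smt (verit) positive_imp_inverse_positive mult_pos_pos)
    have "ybar k = (\<Sum>j<k. (inverse (Lam k) * (lam j * \<eta> * p j)) *\<^sub>R y j)"
      unfolding ybar_def by (simp add: scaleR_sum_right)
    also have "\<dots> \<in> X"
    proof (rule convex_sum[OF _ X_convex])
      show "(\<Sum>j<k. inverse (Lam k) * (lam j * \<eta> * p j)) = 1"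
      proof -
        have "(\<Sum>j<k. inverse (Lam k) * (lam j * \<eta> * p j)) = inverse (Lam k) * Lam k"
          unfolding Lam_def by (simp add: sum_distrib_left)
        moreover have "Lam k > 0" unfolding Lam_eq using Lp_pos eta_pos by simp
        ultimately show ?thesis by simp
      qed
      show "\<And>i. i \<in> {..<k} \<Longrightarrow> 0 \<le> inverse (Lam k) * (lam i * \<eta> * p i)"
        using Lp_pos eta_pos lamk_pos p_pos unfolding Lam_eq by (simp add: less_imp_le)
      show "\<And>i. i \<in> {..<k} \<Longrightarrow> y i \<in> X" using yX by simp
    qed simp
    finally have "ybar k \<in> X" .
    then show "0 \<le> gap (ybar k) F X" unfolding gap_def
      using cSUP_upper[OF _ bdd] by fastforce
  qed
  show ?thesis using main unfolding Let_def ybar_def Lam_def p_def bk_def b_def L_def DX_def CH_def .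
qed

end
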